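(* For every positive integer $n$, $$\sum_{j=1}^{n}\csc^8\left(\frac{\pi j}{2n+1}\right) = \frac{128(n+1)n(n^2+n+3)(3n^4+6n^3+7n^2+4n+15)}{14175}.$$ *)

theory Defs
  imports Complex_Main
begin

end

theory Submission
  imports Defs "HOL-Computational_Algebra.Polynomial"
begin

fun U :: "nat \<Rightarrow> real poly" where
  "U 0 = [:1:]"
| "U (Suc 0) = [:3, -4:]"
| "U (Suc (Suc n)) = [:2, -4:] * U (Suc n) - U n"

lemma U_sin: "sin t * poly (U n) ((sin t)^2) = sin ((2 * real n + 1) * t)"
proof (induction n rule: U.induct)
  case 1 then show ?case by simp
next
  case 2
  have e: "3 * t = 2 * t + t" by simp
  have "sin (3 * t) = sin (2*t) * cos t + cos (2*t) * sin t" unfolding e by (rule sin_add)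
  also have "\<dots> = 2 * sin t * (cos t)^2 + (1 - 2 * (sin t)^2) * sin t"
    by (simp add: sin_double cos_double_sin power2_eq_square)
  also have "\<dots> = 2 * sin t * (1 - (sin t)^2) + (1 - 2 * (sin t)^2) * sin t"
    by (simp add: cos_squared_eq)
  also have "\<dots> = 3 * sin t - 4 * sin t ^ 3"
    by (simp add: algebra_simps power2_eq_square power3_eq_cube)
  finally have "sin (3 * t) = 3 * sin t - 4 * sin t ^ 3" .
  then show ?case by (simp add: algebra_simps power3_eq_cube power2_eq_square)
next
  case (3 n)
  let ?a = "(2 * real (Suc n) + 1) * t"
  have e1: "(2 * real (Suc (Suc n)) + 1) * t = ?a + 2 * t" by (simp add: algebra_simps)
  have e2: "(2 * real n + 1) * t = ?a - 2 * t" by (simp add: algebra_simps)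
  have gen: "\<And>a b::real. sin (a + b) = 2 * cos b * sin a - sin (a - b)"
    by (simp add: sin_add sin_diff algebra_simps)
  have key: "sin (?a + 2*t) = 2 * cos (2*t) * sin ?a - sin (?a - 2*t)"
    by (rule gen)
  have c2: "cos (2*t) = 1 - 2 * (sin t)^2" by (simp add: cos_double_sin)
  have "sin t * poly (U (Suc (Suc n))) ((sin t)^2)
      = (2 - 4 * (sin t)^2) * (sin t * poly (U (Suc n)) ((sin t)^2)) - sin t * poly (U n) ((sin t)^2)"
    by (simp add: algebra_simps)
  also have "\<dots> = (2 - 4 * (sin t)^2) * sin ?a - sin (?a - 2*t)"
    using 3 e2 by simp
  also have "\<dots> = sin (?a + 2*t)" unfolding key c2 by (simp add: algebra_simps)
  finally show ?case using e1 by simp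
qed

lemma mult24: "[:2, -4:] * q = smult 2 q + pCons 0 (smult (-4) q)"
  by simp

lemma coeff_U_high: "k > n \<Longrightarrow> coeff (U n) k = 0" and coeff_U_top: "coeff (U n) n = (-4)^n"
proof -
  have "(\<forall>k>n. coeff (U n) k = 0) \<and> coeff (U n) n = (-4)^n"
  proof (induction n rule: U.induct)
    case 1 then show ?case by (auto simp: coeff_pCons split: nat.split)
  next
    case 2 then show ?case by (auto simp: coeff_pCons split: nat.split)
  next
    case (3 n)
    show ?case
    proof (intro conjI allI impI)
      fix k assume "k > Suc (Suc n)"
      then obtain k' where k: "k = Suc k'" "k' > Suc n" by (cases k) auto
      then show "coeff (U (Suc (Suc n))) k = 0" using 3 by (simp add: mult24)
    next
      show "coeff (U (Suc (Suc n))) (Suc (Suc n)) = (-4) ^ Suc (Suc n)"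
        using 3 by (simp add: mult24)
    qed
  qed
  then show "k > n \<Longrightarrow> coeff (U n) k = 0" "coeff (U n) n = (-4)^n" by auto
qed

lemma degree_U: "degree (U n) = n"
proof (rule antisym)
  show "degree (U n) \<le> n" by (rule degree_le) (simp add: coeff_U_high)
  show "n \<le> degree (U n)" by (rule le_degree) (simp add: coeff_U_top)
qed

definition cc :: "nat \<Rightarrow> nat \<Rightarrow> real" where
  "cc k n = (let m = 2 * real n + 1 in
     (if k = 0 then m
      else if k = 1 then - m * (m^2 - 1) / 6
      else if k = 2 then m * (m^2 - 1) * (m^2 - 9) / 120
      else if k = 3 then - m * (m^2 - 1) * (m^2 - 9) * (m^2 - 25) / 5040
      else m * (m^2 - 1) * (m^2 - 9) * (m^2 - 25) * (m^2 - 49) / 362880))"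

lemma cc_rec:
  assumes "k' < 4"
  shows "cc (Suc k') (Suc (Suc n)) = 2 * cc (Suc k') (Suc n) - 4 * cc k' (Suc n) - cc (Suc k') n"
proof -
  have r0: "cc (Suc 0) (Suc (Suc n)) = 2 * cc (Suc 0) (Suc n) - 4 * cc 0 (Suc n) - cc (Suc 0) n"
    by (simp add: cc_def Let_def field_simps; algebra)
  have r1: "cc (Suc 1) (Suc (Suc n)) = 2 * cc (Suc 1) (Suc n) - 4 * cc 1 (Suc n) - cc (Suc 1) n"
    by (simp add: cc_def Let_def field_simps; algebra)
  have r2: "cc (Suc 2) (Suc (Suc n)) = 2 * cc (Suc 2) (Suc n) - 4 * cc 2 (Suc n) - cc (Suc 2) n"
    by (simp add: cc_def Let_def field_simps; algebra)
  have r3: "cc (Suc 3) (Suc (Suc n)) = 2 * cc (Suc 3) (Suc n) - 4 * cc 3 (Suc n) - cc (Suc 3) n"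
    by (simp add: cc_def Let_def field_simps; algebra)
  from assms have "k' = 0 \<or> k' = 1 \<or> k' = 2 \<or> k' = 3" by auto
  then show ?thesis using r0 r1 r2 r3 by auto
qed

lemma coeff_U_low: "k \<le> 4 \<Longrightarrow> coeff (U n) k = cc k n"
proof (induction n arbitrary: k rule: U.induct)
  case 1 then show ?case
    by (auto simp: cc_def Let_def coeff_pCons split: nat.split)
next
  case 2 then show ?case
    by (auto simp: cc_def Let_def coeff_pCons split: nat.split) 
next
  case (3 n)
  show ?case
  proof (cases k)
    case 0 then show ?thesis using 3 by (simp add: mult24 cc_def Let_def algebra_simps)
  next
    case (Suc k')
    then have "coeff (U (Suc (Suc n))) k = 2 * cc k (Suc n) - 4 * cc k' (Suc n) - cc k n"
      using 3 by (simp add: mult24)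
    also have "\<dots> = cc k (Suc (Suc n))"
      using Suc 3(3) cc_rec[of k' n] by simp
    finally show ?thesis .
  qed
qed

lemma prod_lin_dvd:
  fixes p :: "real poly" and s r :: "nat \<Rightarrow> real"
  assumes "finite A" "inj_on s A" "\<forall>j\<in>A. poly p (s j) = 0" "\<forall>j\<in>A. r j * s j = 1"
  shows "(\<Prod>j\<in>A. [:1, - r j:]) dvd p"
  using assms
proof (induction A arbitrary: p rule: finite_induct)
  case empty then show ?case by simp
next
  case (insert a A)
  have "[:- s a, 1:] dvd p" using insert.prems by (simp add: poly_eq_0_iff_dvd[symmetric])
  moreover have "r a \<noteq> 0" using insert.prems by auto
  ultimately have "smult (- r a) [:- s a, 1:] dvd p" by (intro smult_dvd) simp_all
  moreover have "[:1, - r a:] = smult (- r a) [:- s a, 1:]" using insert.prems by simp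
  ultimately have "[:1, - r a:] dvd p" by simp
  then obtain q where q: "p = [:1, - r a:] * q" by (elim dvdE)
  have "\<forall>j\<in>A. poly q (s j) = 0"
  proof
    fix j assume j: "j \<in> A"
    have "s j \<noteq> s a" using insert.prems(1) insert.hyps(2) j unfolding inj_on_def by blast
    moreover have "r a * s a = 1" using insert.prems by simp
    ultimately have "1 - r a * s j \<noteq> 0"
      by (metis eq_iff_diff_eq_0 mult_cancel_left mult_zero_left zero_neq_one)
    moreover have "poly p (s j) = 0" using insert.prems j by simp
    ultimately show "poly q (s j) = 0" using q by (simp add: mult.commute)
  qed
  then have "(\<Prod>j\<in>A. [:1, - r j:]) dvd q"
    using insert.IH[of q] insert.prems by (auto simp: inj_on_insert)
  then have "[:1, - r a:] * (\<Prod>j\<in>A. [:1, - r j:]) dvd [:1, - r a:] * q"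
    by (rule mult_dvd_mono[OF dvd_refl])
  then show ?case using q insert.hyps by (simp add: prod.insert[OF insert.hyps])
qed

lemma lin_monom:
  fixes x c :: real
  shows "[:1, -x:] * monom c K = monom c K - monom (x*c) (Suc K)"
  by (simp add: poly_eq_iff coeff_monom coeff_pCons split: nat.split)

lemma lin_geom:
  fixes x :: real
  shows "[:1, -x:] * (\<Sum>k<K. monom (x^(k+1)) k) = [:x:] - monom (x^(K+1)) K"
proof (induction K)
  case 0 then show ?case by (simp add: monom_0)
next
  case (Suc K)
  have "[:1, -x:] * (\<Sum>k<Suc K. monom (x^(k+1)) k)
      = [:1, -x:] * (\<Sum>k<K. monom (x^(k+1)) k) + [:1, -x:] * monom (x^(K+1)) K"
    by (simp only: sum.lessThan_Suc distrib_left)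
  also have "\<dots> = [:x:] - monom (x^(K+1)) K + (monom (x^(K+1)) K - monom (x * x^(K+1)) (Suc K))"
    by (simp only: Suc.IH lin_monom)
  also have "\<dots> = [:x:] - monom (x^(Suc K+1)) (Suc K)" by simp
  finally show ?case .
qed


lemma newton_poly:
  fixes r :: "nat \<Rightarrow> real"
  assumes fin: "finite A"
  shows "(\<Prod>j\<in>A. [:1, - r j:]) * (\<Sum>k<K. monom (\<Sum>j\<in>A. r j^(k+1)) k)
     = - pderiv (\<Prod>j\<in>A. [:1, - r j:])
       - (\<Sum>j\<in>A. (\<Prod>i\<in>A-{j}. [:1, - r i:]) * monom (r j^(K+1)) K)"
proof -
  define F where "F = (\<Prod>j\<in>A. [:1, - r j:])"
  have G: "(\<Sum>k<K. monom (\<Sum>j\<in>A. r j^(k+1)) k) = (\<Sum>j\<in>A. \<Sum>k<K. monom (r j^(k+1)) k)"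
    by (simp add: monom_sum sum.swap[of _ A])
  have "F * (\<Sum>j\<in>A. \<Sum>k<K. monom (r j^(k+1)) k)
      = (\<Sum>j\<in>A. F * (\<Sum>k<K. monom (r j^(k+1)) k))" by (simp add: sum_distrib_left)
  also have "\<dots> = (\<Sum>j\<in>A. (\<Prod>i\<in>A-{j}. [:1, - r i:]) * [:r j:]
                   - (\<Prod>i\<in>A-{j}. [:1, - r i:]) * monom (r j^(K+1)) K)"
  proof (rule sum.cong[OF refl])
    fix j assume j: "j \<in> A"
    have "F = [:1, - r j:] * (\<Prod>i\<in>A-{j}. [:1, - r i:])"
      unfolding F_def by (rule prod.remove[OF fin j])
    then have "F * (\<Sum>k<K. monom (r j^(k+1)) k)
       = (\<Prod>i\<in>A-{j}. [:1, - r i:]) * ([:1, - r j:] * (\<Sum>k<K. monom (r j^(k+1)) k))"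
      by (simp only: mult_ac)
    also have "\<dots> = (\<Prod>i\<in>A-{j}. [:1, - r i:]) * ([:r j:] - monom (r j^(K+1)) K)"
      by (simp only: lin_geom)
    finally show "F * (\<Sum>k<K. monom (r j^(k+1)) k) = (\<Prod>i\<in>A-{j}. [:1, - r i:]) * [:r j:]
                   - (\<Prod>i\<in>A-{j}. [:1, - r i:]) * monom (r j^(K+1)) K"
      by (simp add: right_diff_distrib)
  qed
  also have "\<dots> = (\<Sum>j\<in>A. (\<Prod>i\<in>A-{j}. [:1, - r i:]) * [:r j:])
                   - (\<Sum>j\<in>A. (\<Prod>i\<in>A-{j}. [:1, - r i:]) * monom (r j^(K+1)) K)"
    by (simp add: sum_subtractf)
  also have "(\<Sum>j\<in>A. (\<Prod>i\<in>A-{j}. [:1, - r i:]) * [:r j:]) = - pderiv F"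
  proof -
    have "pderiv F = (\<Sum>j\<in>A. (\<Prod>i\<in>A-{j}. [:1, - r i:]) * pderiv [:1, - r j:])"
      unfolding F_def by (rule pderiv_prod)
    also have "\<dots> = (\<Sum>j\<in>A. - ((\<Prod>i\<in>A-{j}. [:1, - r i:]) * [:r j:]))"
      by (simp add: pderiv_pCons)
    finally show ?thesis by (simp add: sum_negf)
  qed
  finally show ?thesis unfolding F_def G .
qed


lemma newton_coeff:
  fixes r :: "nat \<Rightarrow> real"
  assumes fin: "finite A" and kK: "k < K"
  shows "(\<Sum>i\<le>k. coeff (\<Prod>j\<in>A. [:1, - r j:]) i * (\<Sum>j\<in>A. r j^(k-i+1)))
     = - (real (Suc k)) * coeff (\<Prod>j\<in>A. [:1, - r j:]) (Suc k)"
proof -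
  define F where "F = (\<Prod>j\<in>A. [:1, - r j:])"
  have E: "F * (\<Sum>k<K. monom (\<Sum>j\<in>A. r j^(k+1)) k)
     = - pderiv F - (\<Sum>j\<in>A. (\<Prod>i\<in>A-{j}. [:1, - r i:]) * monom (r j^(K+1)) K)"
    unfolding F_def by (rule newton_poly[OF fin])
  have c1: "coeff (F * (\<Sum>k<K. monom (\<Sum>j\<in>A. r j^(k+1)) k)) k
      = (\<Sum>i\<le>k. coeff F i * (\<Sum>j\<in>A. r j^(k-i+1)))"
    unfolding coeff_mult
  proof (rule sum.cong[OF refl])
    fix i assume "i \<in> {..k}"
    then have "k - i < K" using kK by simp
    then show "coeff F i * coeff (\<Sum>k<K. monom (\<Sum>j\<in>A. r j^(k+1)) k) (k - i)
        = coeff F i * (\<Sum>j\<in>A. r j^(k-i+1))"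
      by (simp add: coeff_sum coeff_monom)
  qed
  have c2: "coeff (\<Sum>j\<in>A. (\<Prod>i\<in>A-{j}. [:1, - r i:]) * monom (r j^(K+1)) K) k = 0"
    using kK by (simp add: coeff_sum mult.commute[of _ "monom _ _"] coeff_monom_mult)
  have "(\<Sum>i\<le>k. coeff F i * (\<Sum>j\<in>A. r j^(k-i+1))) = coeff (- pderiv F) k"
    using c1 c2 E by simp
  also have "\<dots> = - (real (Suc k)) * coeff F (Suc k)" by (simp add: coeff_pderiv algebra_simps)
  finally show ?thesis unfolding F_def .
qed


lemma final_alg:
  fixes n :: nat and P1 P2 P3 P4 :: real
  defines "f1 \<equiv> cc 1 n / cc 0 n" and "f2 \<equiv> cc 2 n / cc 0 n"
    and "f3 \<equiv> cc 3 n / cc 0 n" and "f4 \<equiv> cc 4 n / cc 0 n"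
  assumes e0: "P1 = - f1"
    and e1: "P2 + f1 * P1 = - 2 * f2"
    and e2: "P3 + f1 * P2 + f2 * P1 = - 3 * f3"
    and e3: "P4 + f1 * P3 + f2 * P2 + f3 * P1 = - 4 * f4"
  shows "P4 = 128 * (real n + 1) * real n * ((real n)^2 + real n + 3)
      * (3 * (real n)^4 + 6 * (real n)^3 + 7 * (real n)^2 + 4 * real n + 15) / 14175"
proof -
  have p2: "P2 = - 2 * f2 + f1 * f1" using e0 e1 by (simp add: algebra_simps)
  have p3: "P3 = - 3 * f3 - f1 * P2 - f2 * P1" using e2 by (simp add: algebra_simps)
  have p4: "P4 = - 4 * f4 - f1 * P3 - f2 * P2 - f3 * P1" using e3 by (simp add: algebra_simps)
  have nz: "2 * real n + 1 \<noteq> 0" by (simp add: add_pos_nonneg)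
  define m where "m = 2 * real n + 1"
  have mnz: "m \<noteq> 0" using nz m_def by simp
  have F1: "f1 = - (m^2 - 1) / 6" unfolding f1_def cc_def Let_def m_def[symmetric] using mnz
    by (simp add: field_simps)
  have F2: "f2 = (m^2 - 1) * (m^2 - 9) / 120" unfolding f2_def cc_def Let_def m_def[symmetric] using mnz
    by (simp add: field_simps)
  have F3: "f3 = - (m^2 - 1) * (m^2 - 9) * (m^2 - 25) / 5040"
    unfolding f3_def cc_def Let_def m_def[symmetric] using mnz by (simp add: field_simps)
  have F4: "f4 = (m^2 - 1) * (m^2 - 9) * (m^2 - 25) * (m^2 - 49) / 362880"
    unfolding f4_def cc_def Let_def m_def[symmetric] using mnz by (simp add: field_simps)
  have "P4 = - 4 * f4 - f1 * (- 3 * f3 - f1 * (- 2 * f2 + f1 * f1) - f2 * (- f1))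
             - f2 * (- 2 * f2 + f1 * f1) - f3 * (- f1)"
    using p4 p3 p2 e0 by simp
  also have "\<dots> = 128 * (real n + 1) * real n * ((real n)^2 + real n + 3)
      * (3 * (real n)^4 + 6 * (real n)^3 + 7 * (real n)^2 + 4 * real n + 15) / 14175"
    unfolding F1 F2 F3 F4 m_def by (simp add: field_simps; algebra)
  finally show ?thesis .
qed


theorem mainTheorem14:
  fixes n :: nat
  assumes "n \<ge> 1"
  shows "(\<Sum>j=1..n. 1 / (sin (pi * real j / real (2*n+1))) ^ 8)
    = 128 * (real n + 1) * real n * ((real n)^2 + real n + 3)
      * (3 * (real n)^4 + 6 * (real n)^3 + 7 * (real n)^2 + 4 * real n + 15) / 14175"
proof -
  define t where "t j = pi * real j / real (2*n+1)" for j :: nat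
  define s where "s j = (sin (t j))^2" for j
  define r where "r j = 1 / s j" for j
  define A where "A = {1..n}"
  define F where "F = (\<Prod>j\<in>A. [:1, - r j:])"
  define P where "P i = (\<Sum>j\<in>A. r j ^ i)" for i :: nat
  have fin: "finite A" unfolding A_def by simp
  have trange: "0 < t j \<and> t j < pi / 2" if "j \<in> A" for j
  proof -
    have j: "1 \<le> j" "j \<le> n" using that unfolding A_def by auto
    have "0 < t j" unfolding t_def using j by (simp add: divide_pos_pos)
    moreover have "2 * real j < real (2*n+1)" using j by linarith
    then have "pi * (2 * real j) < pi * real (2*n+1)"
      using pi_gt_zero by (intro mult_strict_left_mono) auto
    then have "t j < pi / 2" unfolding t_def
      by (simp add: field_simps)
    ultimately show ?thesis by simp
  qed
  have sinpos: "sin (t j) > 0" if "j \<in> A" for j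
    using trange[OF that] by (intro sin_gt_zero) auto
  have spos: "s j > 0" if "j \<in> A" for j using sinpos[OF that] unfolding s_def by simp
  have rs: "\<forall>j\<in>A. r j * s j = 1" 
  proof
    fix j assume "j \<in> A"
    then have "s j \<noteq> 0" using spos by force
    then show "r j * s j = 1" unfolding r_def by simp
  qed
  have mono: "s i < s j" if "i \<in> A" "j \<in> A" "i < j" for i j
  proof -
    have "t i < t j" unfolding t_def using that(3) by (simp add: divide_strict_right_mono)
    then have "sin (t i) < sin (t j)"
      using trange[OF that(1)] trange[OF that(2)] by (intro sin_monotone_2pi) auto
    then show ?thesis unfolding s_def using sinpos[OF that(1)]
      by (intro power_strict_mono) auto
  qed
  have inj: "inj_on s A"
  proof (rule inj_onI)
    fix i j assume "i \<in> A" "j \<in> A" "s i = s j"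
    then show "i = j" using mono[of i j] mono[of j i] by (cases i j rule: linorder_cases) auto
  qed
  have roots: "\<forall>j\<in>A. poly (U n) (s j) = 0"
  proof
    fix j assume j: "j \<in> A"
    have "(2 * real n + 1) * t j = real j * pi" unfolding t_def by (simp add: field_simps)
    then have "sin (t j) * poly (U n) (s j) = 0" using U_sin[of "t j" n] unfolding s_def
      by (simp add: sin_npi)
    then show "poly (U n) (s j) = 0" using sinpos[OF j] by simp
  qed
  have "F dvd U n" unfolding F_def by (rule prod_lin_dvd[OF fin inj roots rs])
  then obtain q where q: "U n = F * q" by (elim dvdE)
  have rnz: "r j \<noteq> 0" if "j \<in> A" for j using rs that by auto
  have Fnz: "F \<noteq> 0" unfolding F_def using fin by (auto simp: rnz)
  have degF: "degree F = n"
  proof -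
    have "degree F = (\<Sum>j\<in>A. degree [:1, - r j:])" unfolding F_def
      by (rule degree_prod_sum_eq) simp
    also have "\<dots> = (\<Sum>j\<in>A. 1)" using rnz by (intro sum.cong) auto
    finally show ?thesis unfolding A_def by simp
  qed
  have Unz: "U n \<noteq> 0" using coeff_U_top[of n] by auto
  then have qnz: "q \<noteq> 0" using q by auto
  have "degree (U n) = degree F + degree q" using q Fnz qnz by (simp add: degree_mult_eq)
  then have "degree q = 0" using degF degree_U[of n] by simp
  then have qc: "q = [:coeff q 0:]" by (simp add: degree_0_id)
  have F0: "coeff F 0 = 1"
    unfolding poly_0_coeff_0[symmetric] F_def by (simp add: poly_prod)
  have Uk: "coeff (U n) k = coeff q 0 * coeff F k" for k
  proof -
    have "U n = F * [:coeff q 0:]" using q qc by metis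
    then have "U n = smult (coeff q 0) F" by simp
    then show ?thesis by simp
  qed
  then have a: "coeff q 0 = cc 0 n" using F0 coeff_U_low[of 0 n] by simp
  have c0pos: "cc 0 n \<noteq> 0" by (simp add: cc_def add_pos_nonneg)
  have Fk: "coeff F k = cc k n / cc 0 n" if "k \<le> 4" for k
    using Uk[of k] a coeff_U_low[OF that, of n] c0pos by (simp add: field_simps)
  have N: "(\<Sum>i\<le>k. coeff F i * P (k-i+1)) = - (real (Suc k)) * coeff F (Suc k)" if "k < 4" for k
    unfolding F_def P_def by (rule newton_coeff[OF fin that])
  have N0: "P 1 = - (cc 1 n / cc 0 n)" using N[of 0] F0 Fk[of 1] by simp
  have N1: "P 2 + (cc 1 n / cc 0 n) * P 1 = - 2 * (cc 2 n / cc 0 n)"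
    using N[of 1] F0 Fk[of 1] Fk[of 2] by (simp add: numeral_eq_Suc)
  have N2: "P 3 + (cc 1 n / cc 0 n) * P 2 + (cc 2 n / cc 0 n) * P 1 = - 3 * (cc 3 n / cc 0 n)"
    using N[of 2] F0 Fk[of 1] Fk[of 2] Fk[of 3] by (simp add: numeral_eq_Suc)
  have N3: "P 4 + (cc 1 n / cc 0 n) * P 3 + (cc 2 n / cc 0 n) * P 2 + (cc 3 n / cc 0 n) * P 1
       = - 4 * (cc 4 n / cc 0 n)"
    using N[of 3] F0 Fk[of 1] Fk[of 2] Fk[of 3] Fk[of 4] by (simp add: numeral_eq_Suc)
  have res: "P 4 = 128 * (real n + 1) * real n * ((real n)^2 + real n + 3)
      * (3 * (real n)^4 + 6 * (real n)^3 + 7 * (real n)^2 + 4 * real n + 15) / 14175"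
    by (rule final_alg[OF N0 N1 N2 N3])
  have "(\<Sum>j=1..n. 1 / (sin (pi * real j / real (2*n+1))) ^ 8) = P 4"
    unfolding P_def A_def r_def s_def t_def by (simp add: power_divide flip: power_mult)
  then show ?thesis using res by simp
qed

end
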